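(* Let \[ A = \begin{bmatrix} 0 & 1 & -1 & 1 \\ 1 & 0 & 1 & 0 \\ 1 & 1 & 0 & 0 \end{bmatrix}. \] Then $A$ is totally unimodular, but its $2$-fold $I$-sum \[ I\text{-sum}_2(A) = \begin{bmatrix} I & I \\ A & 0 \\ 0 & A \end{bmatrix} \] (a $10 \times 8$ matrix, where $I$ is the $4\times 4$ identity matrix) is not totally unimodular: the $6\times 6$ submatrix $S$ formed by rows $1,4,5,7,8,9$ and columns $1,2,4,5,7,8$ of $I\text{-sum}_2(A)$ satisfies $\det S = -2$.
   Context: A matrix is totally unimodular if each of its square submatrices has determinant in $\{0,\pm 1\}$. For an integer $N \geq 1$, the $N$-fold $I$-sum of an $m \times n$ matrix $A$ is the $(mN+n) \times nN$ matrix \[ I\text{-sum}_N(A) := \begin{bmatrix} I & I & \cdots & I \\ A & & & \\ & A & & \\ & & \ddots & \\ & & & A \end{bmatrix}, \] where $I$ is the $n \times n$ identity matrix, $N$ copies of which are included in the top block row, and unspecified entries are zero. *)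

theory Defs
  imports "Jordan_Normal_Form.Determinant" "Jordan_Normal_Form.DL_Submatrix"
begin

(* A matrix is totally unimodular if every square submatrix has determinant in {0,1,-1}.
   Submatrices are given by sets of row indices I and column indices J (kept in increasing order). *)
definition totally_unimodular :: "int mat \<Rightarrow> bool" where
  "totally_unimodular A \<longleftrightarrow>
     (\<forall>I J. I \<subseteq> {..<dim_row A} \<longrightarrow> J \<subseteq> {..<dim_col A} \<longrightarrow> card I = card J \<longrightarrow>
        det (submatrix A I J) \<in> {0, 1, -1})"

(* N-fold I-sum of an m x n matrix A: the (m*N+n) x (n*N) matrix
   [ I I ... I ; A 0 ... 0 ; 0 A ... 0 ; ... ; 0 ... 0 A ] (0-based indices). *)
definition I_sum :: "nat \<Rightarrow> int mat \<Rightarrow> int mat" where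
  "I_sum N A = (let m = dim_row A; n = dim_col A in
     mat (m * N + n) (n * N) (\<lambda>(i, j).
       if i < n then (if j mod n = i then 1 else 0)
       else (if j div n = (i - n) div m then A $$ ((i - n) mod m, j mod n) else 0)))"

definition A16 :: "int mat" where
  "A16 = mat_of_rows_list 4 [[0, 1, -1, 1], [1, 0, 1, 0], [1, 1, 0, 0]]"

end

theory Submission
  imports Defs
begin

lemma pick_insert0: "pick (insert a S) 0 = a" if "\<forall>x\<in>S. a < x"
  using that by (auto intro!: Least_equality simp: less_imp_le)

lemma pick_insert_Suc: "finite S \<Longrightarrow> \<forall>x\<in>S. a < x \<Longrightarrow> n < card S \<Longrightarrow>
   pick (insert a S) (Suc n) = pick S n"
proof (induction n)
  case 0
  have "(\<lambda>x. x \<in> insert a S \<and> pick (insert a S) 0 < x) = (\<lambda>x. x \<in> S)"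
    using 0 pick_insert0[of S a] by auto
  then show ?case by simp
next
  case (Suc n)
  have IH: "pick (insert a S) (Suc n) = pick S n" using Suc by simp
  have "pick S n \<in> S" using Suc by (intro pick_in_set_le) simp
  then have "(\<lambda>x. x \<in> insert a S \<and> pick S n < x) = (\<lambda>x. x \<in> S \<and> pick S n < x)"
    using Suc.prems by (auto simp: fun_eq_iff)
  then show ?case using IH by simp
qed

lemma det_mat0: "det (mat 0 0 f) = 1"
  by (simp add: det_def)

lemma det_mat_Suc: "det (mat (Suc n) (Suc n) f) = (\<Sum>i<Suc n. (if f(i,0)=0 then 0 else
   f(i,0) * (-1)^i * det (mat n n (\<lambda>(i',j'). f (if i'<i then i' else Suc i', Suc j')))))"
proof -
  have "det (mat (Suc n) (Suc n) f) = (\<Sum>i<Suc n. mat (Suc n) (Suc n) f $$ (i,0) * cofactor (mat (Suc n) (Suc n) f) i 0)"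
    by (rule laplace_expansion_column) auto
  also have "\<dots> = (\<Sum>i<Suc n. (if f(i,0)=0 then 0 else
   f(i,0) * (-1)^i * det (mat n n (\<lambda>(i',j'). f (if i'<i then i' else Suc i', Suc j')))))"
  proof (rule sum.cong[OF refl])
    fix i assume i: "i \<in> {..<Suc n}"
    have "mat_delete (mat (Suc n) (Suc n) f) i 0 = mat n n (\<lambda>(i',j'). f (if i'<i then i' else Suc i', Suc j'))"
      by (rule eq_matI) (auto simp: mat_delete_def)
    then show "mat (Suc n) (Suc n) f $$ (i, 0) * cofactor (mat (Suc n) (Suc n) f) i 0 = (if f(i,0)=0 then 0 else
   f(i,0) * (-1)^i * det (mat n n (\<lambda>(i',j'). f (if i'<i then i' else Suc i', Suc j'))))"
      using i by (simp add: cofactor_def)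
  qed
  finally show ?thesis .
qed

lemma pick_list: "sorted_wrt (<) xs \<Longrightarrow> k < length xs \<Longrightarrow> pick (set xs) k = xs ! k"
proof (induction xs arbitrary: k)
  case Nil then show ?case by simp
next
  case (Cons a ys)
  show ?case
  proof (cases k)
    case 0 then show ?thesis using Cons.prems pick_insert0[of "set ys" a] by simp
  next
    case (Suc k')
    have d: "distinct ys" using Cons.prems by (simp add: strict_sorted_iff)
    have "pick (insert a (set ys)) (Suc k') = pick (set ys) k'"
      using Cons.prems Suc d by (intro pick_insert_Suc) (auto simp: distinct_card)
    then show ?thesis using Cons Suc by simp
  qed
qed

lemma submatrix_list:
  assumes "sorted_wrt (<) xs" "sorted_wrt (<) ys" "\<forall>x\<in>set xs. x < length L" "\<forall>y\<in>set ys. y < n"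
  shows "submatrix (mat_of_rows_list n L) (set xs) (set ys) =
     mat_of_rows_list (length ys) (map (\<lambda>i. map (\<lambda>j. L!i!j) ys) xs)"
proof -
  have dx: "distinct xs" "distinct ys" using assms by (auto simp: strict_sorted_iff)
  have c1: "{i. i < length L \<and> i \<in> set xs} = set xs" using assms by auto
  have c2: "{i. i < n \<and> i \<in> set ys} = set ys" using assms by auto
  show ?thesis
    unfolding submatrix_def mat_of_rows_list_def
    by (rule eq_matI) (auto simp: c1 c2 distinct_card dx pick_list assms)
qed

lemma det_list:
  assumes "length L = Suc n" "\<forall>r\<in>set L. length r = Suc n"
  shows "det (mat_of_rows_list (Suc n) L) = sum_list (map (\<lambda>i. if L!i!0 = 0 then 0 else
     L!i!0 * (-1)^i * det (mat_of_rows_list n (map tl (take i L @ drop (Suc i) L)))) [0..<Suc n])"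
proof -
  have e: "mat_of_rows_list (Suc n) L = mat (Suc n) (Suc n) (\<lambda>(i,j). L!i!j)"
    unfolding mat_of_rows_list_def using assms by simp
  have X: "mat n n (\<lambda>(i', j'). L ! (if i' < i then i' else Suc i') ! Suc j') =
        mat_of_rows_list n (map tl (take i L @ drop (Suc i) L))" if i: "i < Suc n" for i
  proof (rule eq_matI)
    fix a b assume ab: "a < dim_row (mat_of_rows_list n (map tl (take i L @ drop (Suc i) L)))"
       "b < dim_col (mat_of_rows_list n (map tl (take i L @ drop (Suc i) L)))"
    then have a: "a < n" "b < n" using assms i unfolding mat_of_rows_list_def by (auto simp: min_def)
    have len: "length (L ! (if a < i then a else Suc a)) = Suc n" using assms a i
      by (intro assms(2)[rule_format] nth_mem) auto
    show "mat n n (\<lambda>(i', j'). L ! (if i' < i then i' else Suc i') ! Suc j') $$ (a, b) =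
        mat_of_rows_list n (map tl (take i L @ drop (Suc i) L)) $$ (a, b)"
      using a i assms len unfolding mat_of_rows_list_def
      by (auto simp: nth_append nth_tl min_def)
  qed (use assms i in \<open>auto simp: mat_of_rows_list_def min_def\<close>)
  show ?thesis
    unfolding e det_mat_Suc
    apply (simp only: sum_list_distinct_conv_sum_set distinct_upt set_upt atLeast0LessThan)
    apply (rule sum.cong[OF refl])
    using X by (simp del: map_append)
qed

lemma det_list0: "det (mat_of_rows_list 0 []) = 1"
  unfolding mat_of_rows_list_def by (simp add: det_mat0)

lemma det_list_num:
  assumes "length L = numeral k" "\<forall>r\<in>set L. length r = numeral k"
  shows "det (mat_of_rows_list (numeral k) L) = sum_list (map (\<lambda>i. if L!i!0 = 0 then 0 else
     L!i!0 * (-1)^i * det (mat_of_rows_list (pred_numeral k) (map tl (take i L @ drop (Suc i) L)))) [0..<numeral k])"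
  using det_list[of L "pred_numeral k"] assms by (simp add: numeral_eq_Suc)

lemma det_list1:
  assumes "length L = 1" "\<forall>r\<in>set L. length r = 1"
  shows "det (mat_of_rows_list 1 L) = L!0!0"
  using det_list[of L 0] assms by (simp add: det_list0)

lemmas det_simps = det_list_num det_list1 det_list0 det_list upt_rec

lemma A16_eq: "A16 = mat 3 4 (\<lambda>(i,j). [[0, 1, -1, 1], [1, 0, 1, 0], [1, 1, 0, 0::int]] ! i ! j)"
  unfolding A16_def mat_of_rows_list_def by (simp add: eval_nat_numeral)

lemma IS_eq: "I_sum 2 A16 = mat 10 8 (\<lambda>(i, j).
       if i < 4 then (if j mod 4 = i then 1 else 0)
       else (if j div 4 = (i - 4) div 3 then [[0, 1, -1, 1], [1, 0, 1, 0], [1, 1, 0, 0::int]] ! ((i - 4) mod 3) ! (j mod 4) else 0))"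
  unfolding I_sum_def A16_eq by (rule eq_matI) auto

definition L10 :: "int list list" where "L10 = [[1,0,0,0,1,0,0,0],[0,1,0,0,0,1,0,0],[0,0,1,0,0,0,1,0],[0,0,0,1,0,0,0,1],
[0,1,-1,1,0,0,0,0],[1,0,1,0,0,0,0,0],[1,1,0,0,0,0,0,0],
[0,0,0,0,0,1,-1,1],[0,0,0,0,1,0,1,0],[0,0,0,0,1,1,0,0]]"

lemma IS_list: "I_sum 2 A16 = mat_of_rows_list 8 L10"
proof -
  have "list_all (\<lambda>i. list_all (\<lambda>j. (if i < 4 then (if j mod 4 = i then 1 else 0)
       else (if j div 4 = (i - 4) div 3 then [[0, 1, -1, 1], [1, 0, 1, 0], [1, 1, 0, 0::int]] ! ((i - 4) mod 3) ! (j mod 4) else 0))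
      = L10 ! i ! j) [0..<8]) [0..<10]"
    unfolding L10_def by (simp add: upt_rec)
  then show ?thesis unfolding IS_eq mat_of_rows_list_def
    by (intro eq_matI) (auto simp: list_all_iff L10_def)
qed

lemma A16_list: "A16 = mat_of_rows_list 4 [[0, 1, -1, 1], [1, 0, 1, 0], [1, 1, 0, 0]]"
  by (simp add: A16_def)

lemma det_part: "det (submatrix (I_sum 2 A16) {0, 3, 4, 6, 7, 8} {0, 1, 3, 4, 6, 7}) = -2"
proof -
  have "{0, 3, 4, 6, 7, 8} = set [0, 3, 4, 6, 7, 8::nat]" "{0, 1, 3, 4, 6, 7} = set [0, 1, 3, 4, 6, 7::nat]" by simp_all
  then show ?thesis unfolding IS_list
    by (simp only:) (subst submatrix_list, simp_all add: L10_def det_simps)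
qed

lemma subs3: "\<forall>xs\<in>set (subseqs [0,1,2::nat]). sorted_wrt (<) xs \<and> (\<forall>x\<in>set xs. x < 3)"
  by simp

lemma subs4: "\<forall>ys\<in>set (subseqs [0,1,2,3::nat]). sorted_wrt (<) ys \<and> (\<forall>y\<in>set ys. y < 4)"
  by simp

lemma all_dets: "\<forall>xs\<in>set (subseqs [0,1,2::nat]). \<forall>ys\<in>set (subseqs [0,1,2,3::nat]). length xs = length ys \<longrightarrow>
     det (mat_of_rows_list (length ys) (map (\<lambda>i. map (\<lambda>j. [[0, 1, -1, 1], [1, 0, 1, 0], [1, 1, 0, 0::int]]!i!j) ys) xs)) \<in> {0,1,-1}"
  by (simp add: det_simps)

lemma TU_A16: "totally_unimodular A16"
  unfolding totally_unimodular_def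
proof (intro allI impI)
  fix I J assume IJ: "I \<subseteq> {..<dim_row A16}" "J \<subseteq> {..<dim_col A16}" "card I = card J"
  have r: "dim_row A16 = 3" "dim_col A16 = 4" unfolding A16_list mat_of_rows_list_def by simp_all
  have e3: "{..<3::nat} = set [0,1,2]" and e4: "{..<4::nat} = set [0,1,2,3]" by (auto simp: eval_nat_numeral less_Suc_eq)
  have "I \<in> set ` set (subseqs [0,1,2::nat])" using IJ(1) unfolding r e3 by (rule subset_subseqs)
  then obtain xs where xs: "xs \<in> set (subseqs [0,1,2::nat])" "I = set xs" by blast
  have "J \<in> set ` set (subseqs [0,1,2,3::nat])" using IJ(2) unfolding r e4 by (rule subset_subseqs)
  then obtain ys where ys: "ys \<in> set (subseqs [0,1,2,3::nat])" "J = set ys" by blast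
  have sx: "sorted_wrt (<) xs" "\<forall>x\<in>set xs. x < 3" using subs3 xs(1) by blast+
  have sy: "sorted_wrt (<) ys" "\<forall>y\<in>set ys. y < 4" using subs4 ys(1) by blast+
  have "distinct xs" "distinct ys" using sx sy by (auto simp: strict_sorted_iff)
  then have len: "length xs = length ys" using IJ(3) xs(2) ys(2) by (simp add: distinct_card)
  have dm: "det (mat_of_rows_list (length ys) (map (\<lambda>i. map (\<lambda>j. [[0, 1, -1, 1], [1, 0, 1, 0], [1, 1, 0, 0::int]]!i!j) ys) xs)) \<in> {0,1,-1}"
    using all_dets xs(1) ys(1) len by blast
  have eq: "submatrix (mat_of_rows_list 4 [[0, 1, -1, 1], [1, 0, 1, 0], [1, 1, 0, 0::int]]) (set xs) (set ys) =
     mat_of_rows_list (length ys) (map (\<lambda>i. map (\<lambda>j. [[0, 1, -1, 1], [1, 0, 1, 0], [1, 1, 0, 0::int]]!i!j) ys) xs)"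
    by (rule submatrix_list) (use sx sy in auto)
  show "det (submatrix A16 I J) \<in> {0, 1, - 1}"
    unfolding A16_list xs(2) ys(2) eq by (rule dm)
qed

theorem mainTheorem16:
  shows "totally_unimodular A16 \<and> \<not> totally_unimodular (I_sum 2 A16) \<and>
         dim_row (I_sum 2 A16) = 10 \<and> dim_col (I_sum 2 A16) = 8 \<and>
         det (submatrix (I_sum 2 A16) {0, 3, 4, 6, 7, 8} {0, 1, 3, 4, 6, 7}) = -2"
proof -
  have d: "dim_row (I_sum 2 A16) = 10" "dim_col (I_sum 2 A16) = 8" unfolding IS_eq by simp_all
  have "\<not> totally_unimodular (I_sum 2 A16)"
  proof
    assume tu: "totally_unimodular (I_sum 2 A16)"
    have s1: "{0, 3, 4, 6, 7, 8::nat} \<subseteq> {..<dim_row (I_sum 2 A16)}" unfolding d by simp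
    have s2: "{0, 1, 3, 4, 6, 7::nat} \<subseteq> {..<dim_col (I_sum 2 A16)}" unfolding d by simp
    have c: "card {0, 3, 4, 6, 7, 8::nat} = card {0, 1, 3, 4, 6, 7::nat}" by simp
    have "det (submatrix (I_sum 2 A16) {0, 3, 4, 6, 7, 8} {0, 1, 3, 4, 6, 7}) \<in> {0, 1, -1}"
      using tu s1 s2 c unfolding totally_unimodular_def by blast
    then show False unfolding det_part by simp
  qed
  then show ?thesis using TU_A16 d det_part by simp
qed

end
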